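(* Let $\mathbf p$ be a Nash-routing of a sum-bucket game on a simple graph with $n\ge2$ nodes whose strategy paths are all simple, and let $\mathbf p^*$ be an optimal routing with $\overline C^*=\overline C(\mathbf p^* )$ and $\overline D^*=\overline D(\mathbf p^* )$. Then $\overline C(\mathbf p)\le18\,\overline C^*\,\overline D^*\lg^2 n$.
   Context: A routing game $(\mathbf N,G,\mathcal P)$: players $\{1,\dots,N\}$ ($N\ge1$), a simple graph $G$ with $n$ nodes, and for each player $i$ a nonempty finite set $\mathcal P_i$ of simple paths (each with at least one edge) from $u_i$ to $v_i$; $\mathcal P=\bigcup_i\mathcal P_i$, $L=\max_{p\in\mathcal P}|p|$ (number of edges). A routing is $\mathbf p=[p_1,\dots,p_N]$, $p_i\in\mathcal P_i$. Sum-bucket game: for $k=0,\dots,\lceil\lg L\rceil$ bucket $B_k$ = paths in $\mathcal P$ with length in $[2^k,2^{k+1})$, $B(q)$ = bucket index of $q$; normalized length $\overline D_q=2^{B(q)+1}-1$; $\overline C_{e,q}(\mathbf p)$ = number of players $j$ with $e\in p_j$ and $B(p_j)=B(q)$; $\overline C_q(\mathbf p)=\max_{e\in q}\overline C_{e,q}(\mathbf p)$; $\overline C_i=\overline C_{p_i}$, $\overline D_i=\overline D_{p_i}$; player cost $pc_i=\overline C_i+\overline D_i$; $\overline C(\mathbf p)=\max_i\overline C_i$, $\overline D(\mathbf p)=\max_i\overline D_i$; social cost $SC=\overline C+\overline D$. A Nash-routing: no player can strictly lower its cost by unilaterally changing its path within $\mathcal P_i$; an optimal routing minimizes $SC$.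 $\lg=\log_2$. *)

theory Defs
  imports Complex_Main
begin

definition simple_graph :: "'v set \<Rightarrow> 'v set set \<Rightarrow> bool" where
  "simple_graph V E \<longleftrightarrow> finite V \<and> (\<forall>e\<in>E. e \<subseteq> V \<and> card e = 2)"

definition path_edges :: "'v list \<Rightarrow> 'v set set" where
  "path_edges q = {{q ! k, q ! Suc k} | k. Suc k < length q}"

definition plen :: "'v list \<Rightarrow> nat" where
  "plen q = length q - 1"

definition simple_path :: "'v set \<Rightarrow> 'v set set \<Rightarrow> 'v \<Rightarrow> 'v \<Rightarrow> 'v list \<Rightarrow> bool" where
  "simple_path V E u v q \<longleftrightarrow> length q \<ge> 2 \<and> distinct q \<and> set q \<subseteq> V \<and>
     hd q = u \<and> last q = v \<and> path_edges q \<subseteq> E"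

definition routing_game :: "'v set \<Rightarrow> 'v set set \<Rightarrow> nat \<Rightarrow> (nat \<Rightarrow> 'v list set) \<Rightarrow> bool" where
  "routing_game V E N P \<longleftrightarrow> simple_graph V E \<and> N \<ge> 1 \<and>
     (\<forall>i<N. finite (P i) \<and> P i \<noteq> {} \<and>
        (\<exists>u v. \<forall>q\<in>P i. simple_path V E u v q))"

definition is_routing :: "nat \<Rightarrow> (nat \<Rightarrow> 'v list set) \<Rightarrow> (nat \<Rightarrow> 'v list) \<Rightarrow> bool" where
  "is_routing N P p \<longleftrightarrow> (\<forall>i<N. p i \<in> P i)"

(* bucket index: the k with 2^k \<le> |q| < 2^(k+1) *)
definition bucket :: "'v list \<Rightarrow> nat" where
  "bucket q = (GREATEST k. 2 ^ k \<le> plen q)"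

definition Dbar_path :: "'v list \<Rightarrow> nat" where
  "Dbar_path q = 2 ^ (bucket q + 1) - 1"

definition Cbar_edge :: "nat \<Rightarrow> (nat \<Rightarrow> 'v list) \<Rightarrow> 'v set \<Rightarrow> 'v list \<Rightarrow> nat" where
  "Cbar_edge N p e q = card {j. j < N \<and> e \<in> path_edges (p j) \<and> bucket (p j) = bucket q}"

definition Cbar_path :: "nat \<Rightarrow> (nat \<Rightarrow> 'v list) \<Rightarrow> 'v list \<Rightarrow> nat" where
  "Cbar_path N p q = Max ((\<lambda>e. Cbar_edge N p e q) ` path_edges q)"

definition player_cost :: "nat \<Rightarrow> (nat \<Rightarrow> 'v list) \<Rightarrow> nat \<Rightarrow> nat" where
  "player_cost N p i = Cbar_path N p (p i) + Dbar_path (p i)"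

definition Cbar :: "nat \<Rightarrow> (nat \<Rightarrow> 'v list) \<Rightarrow> nat" where
  "Cbar N p = Max ((\<lambda>i. Cbar_path N p (p i)) ` {..<N})"

definition Dbar :: "nat \<Rightarrow> (nat \<Rightarrow> 'v list) \<Rightarrow> nat" where
  "Dbar N p = Max ((\<lambda>i. Dbar_path (p i)) ` {..<N})"

definition social_cost :: "nat \<Rightarrow> (nat \<Rightarrow> 'v list) \<Rightarrow> nat" where
  "social_cost N p = Cbar N p + Dbar N p"

definition nash_routing :: "nat \<Rightarrow> (nat \<Rightarrow> 'v list set) \<Rightarrow> (nat \<Rightarrow> 'v list) \<Rightarrow> bool" where
  "nash_routing N P p \<longleftrightarrow> is_routing N P p \<and>
     (\<forall>i<N. \<forall>q\<in>P i. \<not> player_cost N (p(i := q)) i < player_cost N p i)"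

definition optimal_routing :: "nat \<Rightarrow> (nat \<Rightarrow> 'v list set) \<Rightarrow> (nat \<Rightarrow> 'v list) \<Rightarrow> bool" where
  "optimal_routing N P p \<longleftrightarrow> is_routing N P p \<and>
     (\<forall>p'. is_routing N P p' \<longrightarrow> social_cost N p \<le> social_cost N p')"

end

theory Submission
  imports Defs
begin

lemma path_edges_img: "path_edges q = (\<lambda>k. {q ! k, q ! Suc k}) ` {..<length q - 1}"
  unfolding path_edges_def by auto

lemma path_edges_finite: "finite (path_edges q)"
  unfolding path_edges_img by simp

lemma card_path_edges: "card (path_edges q) \<le> plen q"
proof -
  have "card (path_edges q) \<le> card {..<length q - 1}"
    unfolding path_edges_img by (rule card_image_le) simp
  then show ?thesis unfolding plen_def by simp
qed

lemma path_edges_nonempty: "length q \<ge> 2 \<Longrightarrow> path_edges q \<noteq> {}"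
proof -
  assume "length q \<ge> 2"
  then have "{q ! 0, q ! Suc 0} \<in> path_edges q" unfolding path_edges_def by force
  then show ?thesis by blast
qed

lemma plen_less: "plen q < 2 ^ (bucket q + 1)"
proof (rule ccontr)
  assume a: "\<not> plen q < 2 ^ (bucket q + 1)"
  have b: "\<forall>y. 2 ^ y \<le> plen q \<longrightarrow> y \<le> plen q"
    using less_exp less_imp_le_nat order_trans by blast
  have a': "2 ^ (bucket q + 1) \<le> plen q" using a by (simp only: not_less)
  have "bucket q + 1 \<le> (GREATEST k. 2 ^ k \<le> plen q)"
    by (rule Greatest_le_nat[where b="plen q"]) (use a' b in auto)
  then have "bucket q + 1 \<le> bucket q" unfolding bucket_def .
  then show False by simp
qed

lemma plen_le_Dbar: "plen q \<le> Dbar_path q"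
  using plen_less[of q] unfolding Dbar_path_def by simp

lemma Dbar_path_ge1: "Dbar_path q \<ge> 1"
  unfolding Dbar_path_def
proof -
  have "(2::nat) \<le> 2 ^ (bucket q + 1)" by simp
  then show "1 \<le> 2 ^ (bucket q + 1) - (1::nat)" by linarith
qed

theorem mainTheorem14:
  fixes V :: "'v set" and E :: "'v set set" and N :: nat
    and P :: "nat \<Rightarrow> 'v list set" and p pstar :: "nat \<Rightarrow> 'v list"
  assumes "routing_game V E N P"
    and "card V \<ge> 2"
    and "nash_routing N P p"
    and "optimal_routing N P pstar"
  shows "real (Cbar N p) \<le> 18 * real (Cbar N pstar) * real (Dbar N pstar) * (log 2 (real (card V)))\<^sup>2"
proof -
  have sg: "simple_graph V E" and N1: "N \<ge> 1"
    and gi: "\<And>i. i < N \<Longrightarrow> \<exists>u v. \<forall>q\<in>P i. simple_path V E u v q"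
  proof -
    have rg: "simple_graph V E \<and> N \<ge> 1 \<and> (\<forall>i<N. finite (P i) \<and> P i \<noteq> {} \<and>
        (\<exists>u v. \<forall>q\<in>P i. simple_path V E u v q))"
      using assms(1) unfolding routing_game_def .
    then show "simple_graph V E" "N \<ge> 1" by (rule conjunct1, metis conjunct1 conjunct2)
    fix i assume iN: "i < N"
    have "\<forall>i<N. finite (P i) \<and> P i \<noteq> {} \<and> (\<exists>u v. \<forall>q\<in>P i. simple_path V E u v q)"
      using rg by (metis conjunct2)
    then have "finite (P i) \<and> P i \<noteq> {} \<and> (\<exists>u v. \<forall>q\<in>P i. simple_path V E u v q)"
      using iN by blast
    then show "\<exists>u v. \<forall>q\<in>P i. simple_path V E u v q" by (metis conjunct2)
  qed
  have sp: "length q \<ge> 2 \<and> path_edges q \<subseteq> E" if iN: "i < N" and qP: "q \<in> P i" for i q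
  proof -
    obtain u v where "\<forall>q\<in>P i. simple_path V E u v q" using gi[OF iN] by blast
    then have "simple_path V E u v q" using qP by blast
    then show ?thesis unfolding simple_path_def by blast
  qed
  have pP: "p i \<in> P i" if "i < N" for i
  proof -
    have "is_routing N P p" using assms(3) unfolding nash_routing_def by blast
    then show ?thesis using that unfolding is_routing_def by blast
  qed
  have psP: "pstar i \<in> P i" if "i < N" for i
  proof -
    have "is_routing N P pstar" using assms(4) unfolding optimal_routing_def by blast
    then show ?thesis using that unfolding is_routing_def by blast
  qed
  have nash: "player_cost N p i \<le> player_cost N (p(i := q)) i" if "i < N" "q \<in> P i" for i q
  proof -
    have "\<forall>i<N. \<forall>q\<in>P i. \<not> player_cost N (p(i := q)) i < player_cost N p i"
      using assms(3) unfolding nash_routing_def by blast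
    then show ?thesis using that by (simp add: not_less)
  qed
  have finV: "finite V" using sg unfolding simple_graph_def by auto
  have Esub: "E \<subseteq> {B. B \<subseteq> V \<and> card B = 2}" using sg unfolding simple_graph_def by auto
  have finE: "finite E" proof -
    have "E \<subseteq> Pow V" using Esub by auto
    then show ?thesis using finV finite_subset by blast
  qed
  define n where "n = card V"
  have cardE: "card E \<le> n ^ 2"
  proof -
    have "card E \<le> card {B. B \<subseteq> V \<and> card B = 2}"
      using Esub finV by (intro card_mono) auto
    also have "\<dots> = n choose 2" using n_subsets[OF finV] n_def by simp
    also have "\<dots> \<le> n ^ 2" using assms(2) n_def by (intro binomial_le_pow) auto
    finally show ?thesis .
  qed
  define K where "K = Cbar N pstar"
  define D where "D = Dbar N pstar"
  define S where "S e k = {j. j < N \<and> e \<in> path_edges (p j) \<and> bucket (p j) = k}" for e k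
  define Ss where "Ss e k = {j. j < N \<and> e \<in> path_edges (pstar j) \<and> bucket (pstar j) = k}" for e k
  define X where "X t = {j. j < N \<and> t \<le> player_cost N p j}" for t
  define Z where "Z t = {(e,k). e \<in> E \<and> 2^(k+1) - 1 \<le> D \<and> t \<le> card (S e k) + (2^(k+1) - 1)}" for t
  have finS: "finite (S e k)" for e k unfolding S_def by auto
  have finSs: "finite (Ss e k)" for e k unfolding Ss_def by auto
  have finX: "finite (X t)" for t unfolding X_def by auto
  have F1: "card (S e (bucket (p j))) \<le> Cbar_path N p (p j)" if "j < N" "e \<in> path_edges (p j)" for j e
    unfolding Cbar_path_def using that path_edges_finite
    by (intro Max_ge) (auto simp: Cbar_edge_def S_def)
  have F2: "card (Ss e (bucket (pstar j))) \<le> K" if "j < N" "e \<in> path_edges (pstar j)" for j e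
  proof -
    have "card (Ss e (bucket (pstar j))) \<le> Cbar_path N pstar (pstar j)"
      unfolding Cbar_path_def using that path_edges_finite
      by (intro Max_ge) (auto simp: Cbar_edge_def Ss_def)
    also have "\<dots> \<le> K" unfolding K_def Cbar_def using that by (intro Max_ge) auto
    finally show ?thesis .
  qed
  have F3: "Dbar_path (pstar j) \<le> D" if "j < N" for j
    unfolding D_def Dbar_def using that by (intro Max_ge) auto
  have ZsubE: "Z t \<subseteq> E \<times> {..<D}" for t
  proof
    fix z assume "z \<in> Z t"
    then obtain e k where z: "z = (e,k)" "e \<in> E" "2^(k+1) - 1 \<le> D" unfolding Z_def by auto
    have "k + 1 < 2 ^ (k+1)" by (rule less_exp)
    then have "k < D" using z(3) by linarith
    then show "z \<in> E \<times> {..<D}" using z by auto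
  qed
  have finZ: "finite (Z t)" for t using ZsubE finE by (meson finite_SigmaI finite_lessThan finite_subset)
  have LemA: "card (X (t+1)) \<le> K * card (Z t)" for t
  proof -
    have sub: "X (t+1) \<subseteq> (\<Union>z\<in>Z t. case z of (e,k) \<Rightarrow> Ss e k)"
    proof
      fix j assume "j \<in> X (t+1)"
      then have j: "j < N" "t + 1 \<le> player_cost N p j" unfolding X_def by auto
      define q where "q = pstar j"
      have qP: "q \<in> P j" using psP j q_def by auto
      have spq: "length q \<ge> 2" "path_edges q \<subseteq> E" using sp[OF j(1) qP] by auto
      define p' where "p' = p(j := q)"
      have "player_cost N p j \<le> player_cost N p' j" using nash[OF j(1) qP] p'_def by simp
      also have "\<dots> = Cbar_path N p' q + Dbar_path q" unfolding player_cost_def p'_def by simp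
      finally have c1: "t + 1 \<le> Cbar_path N p' q + Dbar_path q" using j by linarith
      have "Cbar_path N p' q \<in> (\<lambda>e. Cbar_edge N p' e q) ` path_edges q"
        unfolding Cbar_path_def using path_edges_finite path_edges_nonempty[OF spq(1)] by (intro Max_in) auto
      then obtain e where e: "e \<in> path_edges q" "Cbar_path N p' q = Cbar_edge N p' e q" by auto
      have "Cbar_edge N p' e q \<le> card (insert j (S e (bucket q)))"
        unfolding Cbar_edge_def using finS by (intro card_mono) (auto simp: S_def p'_def)
      also have "\<dots> \<le> card (S e (bucket q)) + 1" by (simp add: card_insert_if finS)
      finally have c2: "Cbar_edge N p' e q \<le> card (S e (bucket q)) + 1" .
      have dq: "Dbar_path q = 2^(bucket q + 1) - 1" unfolding Dbar_path_def by simp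
      have dD: "Dbar_path q \<le> D" using F3 j q_def by simp
      have "(e, bucket q) \<in> Z t"
        unfolding Z_def using c1 c2 e dq dD spq(2) by auto
      moreover have "j \<in> Ss e (bucket q)" unfolding Ss_def using j e q_def by auto
      ultimately show "j \<in> (\<Union>z\<in>Z t. case z of (e,k) \<Rightarrow> Ss e k)" by force
    qed
    have "card (X (t+1)) \<le> card (\<Union>z\<in>Z t. case z of (e,k) \<Rightarrow> Ss e k)"
      using sub finZ finSs by (intro card_mono) auto
    also have "\<dots> \<le> (\<Sum>z\<in>Z t. card (case z of (e,k) \<Rightarrow> Ss e k))"
      using finZ by (rule card_UN_le)
    also have "\<dots> \<le> card (Z t) * K"
    proof (rule sum_bounded_above[where K=K, simplified])
      fix z assume "z \<in> Z t"
      obtain e k where z: "z = (e,k)" by fastforce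
      show "card (case z of (e,k) \<Rightarrow> Ss e k) \<le> K"
      proof (cases "Ss e k = {}")
        case True then show ?thesis using z by simp
      next
        case False
        then obtain j where "j \<in> Ss e k" by auto
        then have "j < N" "e \<in> path_edges (pstar j)" "k = bucket (pstar j)" unfolding Ss_def by auto
        then show ?thesis using F2 z by auto
      qed
    qed
    finally show ?thesis by (simp add: mult.commute)
  qed
  have LemB: "card (Z t) * (t - D) \<le> D * card (X t)" for t
  proof -
    define S' where "S' z = (case z of (e,k) \<Rightarrow> S e k)" for z
    have SX: "S' z \<subseteq> X t" and Sge: "t - D \<le> card (S' z)" if "z \<in> Z t" for z
    proof -
      obtain e k where z0: "z = (e,k)" by (cases z)
      have z: "z = (e,k)" "2^(k+1) - 1 \<le> D" "t \<le> card (S e k) + (2^(k+1) - 1)"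
        using that z0 unfolding Z_def by auto
      show "t - D \<le> card (S' z)" using z unfolding S'_def by auto
      show "S' z \<subseteq> X t"
      proof
        fix j assume "j \<in> S' z"
        then have j: "j < N" "e \<in> path_edges (p j)" "bucket (p j) = k" unfolding S'_def S_def z by auto
        have "t \<le> card (S e (bucket (p j))) + Dbar_path (p j)"
          using z j unfolding Dbar_path_def by simp
        also have "\<dots> \<le> player_cost N p j" unfolding player_cost_def using F1[OF j(1,2)] by simp
        finally show "j \<in> X t" unfolding X_def using j by auto
      qed
    qed
    have "card (Z t) * (t - D) \<le> (\<Sum>z\<in>Z t. card (S' z))"
      using sum_bounded_below[of "Z t" "t - D" "\<lambda>z. card (S' z)"] Sge by simp
    also have "\<dots> = (\<Sum>z\<in>Z t. \<Sum>j\<in>{j\<in>X t. j \<in> S' z}. (1::nat))"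
    proof (rule sum.cong)
      fix z assume "z \<in> Z t"
      then have "S' z \<subseteq> X t" by (rule SX)
      then have "{j\<in>X t. j \<in> S' z} = S' z" by blast
      then show "card (S' z) = (\<Sum>j\<in>{j\<in>X t. j \<in> S' z}. (1::nat))" by simp
    qed simp
    also have "\<dots> = (\<Sum>j\<in>X t. \<Sum>z\<in>{z\<in>Z t. j \<in> S' z}. (1::nat))"
      by (rule sum.swap_restrict[OF finZ finX])
    also have "\<dots> \<le> card (X t) * D"
    proof (rule sum_bounded_above[where K=D, simplified])
      fix j assume jX: "j \<in> X t"
      show "(\<Sum>z\<in>{z\<in>Z t. j \<in> S' z}. (1::nat)) \<le> D"
      proof (cases "{z\<in>Z t. j \<in> S' z} = {}")
        case True
        have "(\<Sum>z\<in>{z\<in>Z t. j \<in> S' z}. (1::nat)) = 0" unfolding True by simp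
        then show ?thesis by simp
      next
        case False
        then obtain e k where ek: "(e,k) \<in> Z t" "j \<in> S e k" unfolding S'_def by auto
        then have kb: "k = bucket (p j)" and kD: "2^(k+1) - 1 \<le> D" unfolding S_def Z_def by auto
        have "{z\<in>Z t. j \<in> S' z} \<subseteq> (\<lambda>e. (e, bucket (p j))) ` path_edges (p j)"
          unfolding S'_def S_def by auto
        then have "card {z\<in>Z t. j \<in> S' z} \<le> card (path_edges (p j))"
          using path_edges_finite by (meson card_image_le card_mono finite_imageI order_trans)
        also have "\<dots> \<le> plen (p j)" by (rule card_path_edges)
        also have "\<dots> \<le> Dbar_path (p j)" by (rule plen_le_Dbar)
        also have "\<dots> \<le> D" using kb kD unfolding Dbar_path_def by simp
        finally show ?thesis by simp
      qed
    qed
    finally show ?thesis by (simp add: mult.commute)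
  qed
  obtain i0 where i0: "i0 < N" "Cbar N p = Cbar_path N p (p i0)"
  proof -
    have "Cbar N p \<in> (\<lambda>i. Cbar_path N p (p i)) ` {..<N}"
      unfolding Cbar_def using N1 by (intro Max_in) (auto simp: lessThan_empty_iff)
    then show ?thesis using that by auto
  qed
  define M0 where "M0 = player_cost N p i0"
  have CM: "Cbar N p < M0" unfolding M0_def player_cost_def using i0 Dbar_path_ge1[of "p i0"] by simp
  have X0: "i0 \<in> X M0" unfolding X_def M0_def using i0 by simp
  have K1: "K \<ge> 1"
  proof -
    have N0: "0 < N" using N1 by simp
    have "length (pstar 0) \<ge> 2" using sp[OF N0 psP[OF N0]] by simp
    then obtain e where e: "e \<in> path_edges (pstar 0)" using path_edges_nonempty by blast
    have "0 \<in> Ss e (bucket (pstar 0))" unfolding Ss_def using N0 e by simp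
    then have "1 \<le> card (Ss e (bucket (pstar 0)))" using finSs by (metis One_nat_def Suc_leI card_gt_0_iff empty_iff)
    then show ?thesis using F2[OF N0 e] by simp
  qed
  have D1: "D \<ge> 1" using F3[of 0] N1 Dbar_path_ge1[of "pstar 0"] by simp
  define x where "x = K * D"
  have x1: "x \<ge> 1" unfolding x_def using K1 D1 by simp
  have Dx: "D \<le> x" unfolding x_def using K1 by simp
  define a where "a = 2 * x + D"
  have rec: "2 * card (X (t+1)) \<le> card (X t)" if "a \<le> t" for t
  proof -
    have "card (X (t+1)) * (t - D) \<le> K * card (Z t) * (t - D)" using LemA by simp
    also have "\<dots> \<le> K * (D * card (X t))" using LemB[of t] by (simp add: mult.assoc)
    finally have h: "card (X (t+1)) * (t - D) \<le> x * card (X t)" unfolding x_def by (simp add: mult.assoc)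
    have "card (X (t+1)) * (2 * x) \<le> card (X (t+1)) * (t - D)"
      using that unfolding a_def by (intro mult_le_mono2) linarith
    then have h2: "card (X (t+1)) * (2 * x) \<le> x * card (X t)" using h by (rule order_trans)
    have x0: "0 < x" using x1 by simp
    have eq: "card (X (t+1)) * (2 * x) = x * (2 * card (X (t+1)))" by simp
    have "x * (2 * card (X (t+1))) \<le> x * card (X t)" using h2 unfolding eq .
    then show ?thesis using x0 by (metis mult_le_cancel1 not_less)
  qed
  have growth: "i + a \<le> M0 \<longrightarrow> 2 ^ i \<le> card (X (M0 - i))" for i
  proof (induction i)
    case 0
    have "X M0 \<noteq> {}" using X0 by blast
    then have "0 < card (X M0)" using finX[of M0] by (simp add: card_gt_0_iff)
    then show ?case by simp
  next
    case (Suc i)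
    show ?case
    proof
      assume h: "Suc i + a \<le> M0"
      then have "2 ^ i \<le> card (X (M0 - i))" using Suc by simp
      moreover have "M0 - i = (M0 - Suc i) + 1" using h by simp
      moreover have "2 * card (X ((M0 - Suc i) + 1)) \<le> card (X (M0 - Suc i))"
        using h by (intro rec) simp
      ultimately show "2 ^ Suc i \<le> card (X (M0 - Suc i))" by simp
    qed
  qed
  have cap: "card (X a) \<le> x * n ^ 2"
  proof -
    have a1: "a = (a - 1) + 1" unfolding a_def using D1 by simp
    have "card (X a) \<le> K * card (Z (a - 1))" using LemA[of "a - 1"] a1 by simp
    also have "\<dots> \<le> K * card (E \<times> {..<D})"
      using ZsubE finE by (intro mult_le_mono2 card_mono) auto
    also have "\<dots> = K * (card E * D)" by (simp add: card_cartesian_product)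
    also have "\<dots> \<le> K * (n ^ 2 * D)" using cardE by simp
    finally show ?thesis unfolding x_def by (simp add: algebra_simps)
  qed
  define l where "l = log 2 (real n)"
  have l1: "1 \<le> l" unfolding l_def using le_log2_of_power[of 1 n] assms(2) n_def by simp
  have logx: "log 2 (real x) \<le> real x"
    using log_of_power_le[of x 2 x] x1 less_exp[of x] by simp
  have bound: "real (Cbar N p) \<le> 4 * real x + 2 * l"
  proof (cases "a \<le> M0")
    case True
    have "2 ^ (M0 - a) \<le> x * n ^ 2" using growth[of "M0 - a"] True cap by simp
    then have "real (M0 - a) \<le> log 2 (real (x * n ^ 2))" by (rule le_log2_of_power)
    also have "\<dots> = log 2 (real x) + 2 * l"
      using x1 assms(2) n_def unfolding l_def by (simp add: log_mult log_nat_power)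
    finally have "real (M0 - a) \<le> real x + 2 * l" using logx by linarith
    then show ?thesis using CM True Dx unfolding a_def by linarith
  next
    case False
    then show ?thesis using CM Dx l1 unfolding a_def by linarith
  qed
  have "4 * real x + 2 * l \<le> 18 * real x * l^2"
  proof -
    have x1r: "1 \<le> real x" using x1 by simp
    have "l \<le> l^2" using l1 by (simp add: power2_eq_square)
    moreover have "1 \<le> l^2" using one_le_power[OF l1, of 2] .
    moreover have "1 * l^2 \<le> real x * l^2" using x1r by (intro mult_right_mono) auto
    moreover have "real x * 1 \<le> real x * l^2" using \<open>1 \<le> l^2\<close> by (intro mult_left_mono) auto
    ultimately show ?thesis by linarith
  qed
  then show ?thesis using bound unfolding x_def l_def n_def K_def D_def by simp
qed

end
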